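(* Let $G$ be a finite simple undirected graph and let $r<s$ be positive integers. Let $\mathcal{F}$ be the family of all $k$-$(r,s)$-nuclei of $G$, taken over all positive integers $k$ (each nucleus regarded as a set of $s$-cliques of $G$). Then $\mathcal{F}$ is a laminar family: for any $\mathcal{S},\mathcal{S}'\in\mathcal{F}$, the intersection $\mathcal{S}\cap\mathcal{S}'$ is either empty, or $\mathcal{S}\subseteq\mathcal{S}'$, or $\mathcal{S}'\subseteq\mathcal{S}$.
   Context: A $K_r$ denotes an $r$-clique (a set of $r$ pairwise adjacent vertices) of $G$. For a set $\mathcal{S}$ of $K_s$s of $G$ (with $r<s$): $K_r(\mathcal{S})$ is the set of $K_r$s contained in some $S\in\mathcal{S}$; the $\mathcal{S}$-degree of $R\in K_r(\mathcal{S})$ is the number of $S\in\mathcal{S}$ with $R\subseteq S$; two $K_r$s $R,R'$ are $\mathcal{S}$-connected if there is a sequence $R=R_1,R_2,\dots,R_m=R'$ in $K_r(\mathcal{S})$ such that for each $i$ some $S\in\mathcal{S}$ contains $R_i\cup R_{i+1}$. For positive integers $k$ and $r<s$, a $k$-$(r,s)$-nucleus is a set $\mathcal{S}$ of $K_s$s of $G$ that is maximal (under inclusion) among sets of $K_s$s satisfying: (i) every $R\in K_r(\mathcal{S})$ has $\mathcal{S}$-degree at least $k$; (ii) any $R,R'\in K_r(\mathcal{S})$ are $\mathcal{S}$-connected. *)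

theory Defs
  imports Main
begin

definition simple_graph :: "'a set \<Rightarrow> ('a \<Rightarrow> 'a \<Rightarrow> bool) \<Rightarrow> bool" where
  "simple_graph V E \<longleftrightarrow> finite V \<and> (\<forall>x y. E x y \<longrightarrow> x \<in> V \<and> y \<in> V)
     \<and> (\<forall>x y. E x y \<longrightarrow> E y x) \<and> (\<forall>x. \<not> E x x)"

definition is_clique :: "'a set \<Rightarrow> ('a \<Rightarrow> 'a \<Rightarrow> bool) \<Rightarrow> nat \<Rightarrow> 'a set \<Rightarrow> bool" where
  "is_clique V E r C \<longleftrightarrow> C \<subseteq> V \<and> card C = r \<and> (\<forall>x\<in>C. \<forall>y\<in>C. x \<noteq> y \<longrightarrow> E x y)"

definition Kr_of :: "'a set \<Rightarrow> ('a \<Rightarrow> 'a \<Rightarrow> bool) \<Rightarrow> nat \<Rightarrow> 'a set set \<Rightarrow> 'a set set" where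
  "Kr_of V E r \<S> = {R. is_clique V E r R \<and> (\<exists>S\<in>\<S>. R \<subseteq> S)}"

definition S_degree :: "'a set set \<Rightarrow> 'a set \<Rightarrow> nat" where
  "S_degree \<S> R = card {S\<in>\<S>. R \<subseteq> S}"

definition S_connected :: "'a set \<Rightarrow> ('a \<Rightarrow> 'a \<Rightarrow> bool) \<Rightarrow> nat \<Rightarrow> 'a set set \<Rightarrow> 'a set \<Rightarrow> 'a set \<Rightarrow> bool" where
  "S_connected V E r \<S> R R' \<longleftrightarrow>
     (\<exists>xs. xs \<noteq> [] \<and> hd xs = R \<and> last xs = R' \<and> set xs \<subseteq> Kr_of V E r \<S> \<and>
        (\<forall>i. i + 1 < length xs \<longrightarrow> (\<exists>S\<in>\<S>. xs ! i \<union> xs ! (i + 1) \<subseteq> S)))"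

definition nucleus_prop :: "'a set \<Rightarrow> ('a \<Rightarrow> 'a \<Rightarrow> bool) \<Rightarrow> nat \<Rightarrow> nat \<Rightarrow> nat \<Rightarrow> 'a set set \<Rightarrow> bool" where
  "nucleus_prop V E k r s \<S> \<longleftrightarrow>
     (\<forall>S\<in>\<S>. is_clique V E s S) \<and>
     (\<forall>R\<in>Kr_of V E r \<S>. k \<le> S_degree \<S> R) \<and>
     (\<forall>R\<in>Kr_of V E r \<S>. \<forall>R'\<in>Kr_of V E r \<S>. S_connected V E r \<S> R R')"

definition nucleus :: "'a set \<Rightarrow> ('a \<Rightarrow> 'a \<Rightarrow> bool) \<Rightarrow> nat \<Rightarrow> nat \<Rightarrow> nat \<Rightarrow> 'a set set \<Rightarrow> bool" where
  "nucleus V E k r s \<S> \<longleftrightarrow> nucleus_prop V E k r s \<S> \<and>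
     (\<forall>\<T>. nucleus_prop V E k r s \<T> \<and> \<S> \<subseteq> \<T> \<longrightarrow> \<T> = \<S>)"

end

theory Submission
  imports Defs
begin

lemma Kr_of_mono: "A \<subseteq> B \<Longrightarrow> Kr_of V E r A \<subseteq> Kr_of V E r B"
  unfolding Kr_of_def by blast

lemma S_connected_mono:
  assumes "S_connected V E r A x y" "A \<subseteq> B"
  shows "S_connected V E r B x y"
proof -
  from assms(1) obtain xs where xs: "xs \<noteq> []" "hd xs = x" "last xs = y"
    "set xs \<subseteq> Kr_of V E r A"
    "\<forall>i. i + 1 < length xs \<longrightarrow> (\<exists>S\<in>A. xs ! i \<union> xs ! (i + 1) \<subseteq> S)"
    unfolding S_connected_def by blast
  have "set xs \<subseteq> Kr_of V E r B" using xs(4) Kr_of_mono[OF assms(2)] by blast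
  moreover have "\<forall>i. i + 1 < length xs \<longrightarrow> (\<exists>S\<in>B. xs ! i \<union> xs ! (i + 1) \<subseteq> S)"
    using xs(5) assms(2) by blast
  ultimately show ?thesis using xs unfolding S_connected_def by blast
qed

lemma S_connected_trans:
  assumes "S_connected V E r A x y" "S_connected V E r A y z"
  shows "S_connected V E r A x z"
proof -
  from assms(1) obtain xs where xs: "xs \<noteq> []" "hd xs = x" "last xs = y"
    "set xs \<subseteq> Kr_of V E r A"
    "\<forall>i. i + 1 < length xs \<longrightarrow> (\<exists>S\<in>A. xs ! i \<union> xs ! (i + 1) \<subseteq> S)"
    unfolding S_connected_def by blast
  from assms(2) obtain ys where ys: "ys \<noteq> []" "hd ys = y" "last ys = z"
    "set ys \<subseteq> Kr_of V E r A"
    "\<forall>i. i + 1 < length ys \<longrightarrow> (\<exists>S\<in>A. ys ! i \<union> ys ! (i + 1) \<subseteq> S)"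
    unfolding S_connected_def by blast
  have "y \<in> Kr_of V E r A" using ys(1,2,4) by auto
  then obtain Sy where Sy: "Sy \<in> A" "y \<subseteq> Sy" unfolding Kr_of_def by blast
  have ch: "\<forall>i. i + 1 < length (xs @ ys) \<longrightarrow>
      (\<exists>S\<in>A. (xs @ ys) ! i \<union> (xs @ ys) ! (i + 1) \<subseteq> S)"
  proof (intro allI impI)
    fix i assume i: "i + 1 < length (xs @ ys)"
    consider "i + 1 < length xs" | "i + 1 = length xs" | "i \<ge> length xs" by linarith
    then show "\<exists>S\<in>A. (xs @ ys) ! i \<union> (xs @ ys) ! (i + 1) \<subseteq> S"
    proof cases
      case 1 then show ?thesis using xs(5) by (simp add: nth_append)
    next
      case 2
      have "i = length xs - 1" using 2 by simp
      then have "(xs @ ys) ! i = y" using 2 xs(1,3) by (simp add: nth_append last_conv_nth)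
      moreover have "(xs @ ys) ! (i+1) = y" using 2 ys(1,2) by (simp add: nth_append hd_conv_nth)
      ultimately show ?thesis using Sy by auto
    next
      case 3
      have "i - length xs + 1 < length ys" using i 3 by simp
      then obtain S where "S \<in> A" "ys ! (i - length xs) \<union> ys ! (i - length xs + 1) \<subseteq> S"
        using ys(5) by blast
      moreover have "i + 1 - length xs = i - length xs + 1" using 3 by simp
      ultimately show ?thesis using 3 by (auto simp add: nth_append)
    qed
  qed
  show ?thesis unfolding S_connected_def
    apply (rule exI[of _ "xs @ ys"])
    using xs ys ch by auto
qed

lemma union_prop:
  assumes g: "simple_graph V E" and rs: "r < s"
    and kk: "k \<le> k'"
    and P: "nucleus_prop V E k r s A" and P': "nucleus_prop V E k' r s B"
    and T: "T \<in> A" "T \<in> B"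
  shows "nucleus_prop V E k r s (A \<union> B)"
proof -
  have finV: "finite V" using g unfolding simple_graph_def by blast
  have cl: "\<forall>S\<in>A \<union> B. is_clique V E s S" using P P' unfolding nucleus_prop_def by blast
  have fin: "finite (A \<union> B)"
  proof (rule finite_subset[of _ "Pow V"])
    show "A \<union> B \<subseteq> Pow V" using cl unfolding is_clique_def by blast
  qed (use finV in simp)
  have KU: "Kr_of V E r (A \<union> B) = Kr_of V E r A \<union> Kr_of V E r B"
    unfolding Kr_of_def by blast
  have deg: "\<forall>R\<in>Kr_of V E r (A \<union> B). k \<le> S_degree (A \<union> B) R"
  proof
    fix R assume "R \<in> Kr_of V E r (A \<union> B)"
    then consider "R \<in> Kr_of V E r A" | "R \<in> Kr_of V E r B" using KU by blast
    then show "k \<le> S_degree (A \<union> B) R"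
    proof cases
      case 1
      then have "k \<le> S_degree A R" using P unfolding nucleus_prop_def by blast
      also have "\<dots> \<le> S_degree (A \<union> B) R" unfolding S_degree_def
        by (rule card_mono) (use fin in auto)
      finally show ?thesis .
    next
      case 2
      then have "k' \<le> S_degree B R" using P' unfolding nucleus_prop_def by blast
      also have "\<dots> \<le> S_degree (A \<union> B) R" unfolding S_degree_def
        by (rule card_mono) (use fin in auto)
      finally show ?thesis using kk by simp
    qed
  qed
  have Tc: "is_clique V E s T" using cl T by blast
  then have "finite T" "card T = s" using finV unfolding is_clique_def
    by (auto intro: finite_subset)
  then obtain R0 where R0: "R0 \<subseteq> T" "card R0 = r"
    using obtain_subset_with_card_n[of r T] rs by (metis less_imp_le)
  have "is_clique V E r R0" using Tc R0 unfolding is_clique_def by blast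
  then have R0A: "R0 \<in> Kr_of V E r A" and R0B: "R0 \<in> Kr_of V E r B"
    using R0 T unfolding Kr_of_def by blast+
  have cA: "\<And>x y. x \<in> Kr_of V E r A \<Longrightarrow> y \<in> Kr_of V E r A \<Longrightarrow> S_connected V E r (A \<union> B) x y"
    using P S_connected_mono[of V E r A _ _ "A \<union> B"] unfolding nucleus_prop_def by blast
  have cB: "\<And>x y. x \<in> Kr_of V E r B \<Longrightarrow> y \<in> Kr_of V E r B \<Longrightarrow> S_connected V E r (A \<union> B) x y"
    using P' S_connected_mono[of V E r B _ _ "A \<union> B"] unfolding nucleus_prop_def by blast
  have conn: "\<forall>R\<in>Kr_of V E r (A \<union> B). \<forall>R'\<in>Kr_of V E r (A \<union> B). S_connected V E r (A \<union> B) R R'"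
  proof (intro ballI)
    fix R R' assume "R \<in> Kr_of V E r (A \<union> B)" "R' \<in> Kr_of V E r (A \<union> B)"
    then show "S_connected V E r (A \<union> B) R R'"
      using KU cA cB R0A R0B S_connected_trans[of V E r "A \<union> B" R R0 R'] by blast
  qed
  show ?thesis using cl deg conn unfolding nucleus_prop_def by blast
qed

lemma laminar_aux:
  assumes g: "simple_graph V E" and rs: "r < s" and kk: "k \<le> k'"
    and N: "nucleus V E k r s A" and N': "nucleus V E k' r s B"
    and ne: "A \<inter> B \<noteq> {}"
  shows "B \<subseteq> A"
proof -
  obtain T where "T \<in> A" "T \<in> B" using ne by blast
  then have "nucleus_prop V E k r s (A \<union> B)"
    using union_prop[OF g rs kk] N N' unfolding nucleus_def by blast
  then have "A \<union> B = A" using N unfolding nucleus_def by blast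
  then show ?thesis by blast
qed

theorem lemma1:
  fixes V :: "'a set" and E :: "'a \<Rightarrow> 'a \<Rightarrow> bool" and r s :: nat
  assumes "simple_graph V E" and "0 < r" and "r < s"
  shows "\<forall>k k' \<S> \<S>'. 0 < k \<and> 0 < k' \<and> nucleus V E k r s \<S> \<and> nucleus V E k' r s \<S>' \<longrightarrow>
           \<S> \<inter> \<S>' = {} \<or> \<S> \<subseteq> \<S>' \<or> \<S>' \<subseteq> \<S>"
proof (intro allI impI)
  fix k k' A B
  assume h: "0 < k \<and> 0 < k' \<and> nucleus V E k r s A \<and> nucleus V E k' r s B"
  show "A \<inter> B = {} \<or> A \<subseteq> B \<or> B \<subseteq> A"
  proof (cases "k \<le> k'")
    case True then show ?thesis using laminar_aux[OF assms(1,3) True] h by blast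
  next
    case False
    then have "k' \<le> k" by simp
    then show ?thesis using laminar_aux[OF assms(1,3), of k' k B A] h by blast
  qed
qed

end
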